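(* Let $\mathcal{A}=(A_1,\dots,A_4)\in H^0(\bigwedge^2\mathcal{F}\otimes\mathcal{E}\otimes\det\mathcal{E}^\vee)$, let $p\in\mathbb{P}^1$ with uniformizer $u$, and fix $1\le I<J\le5$, $1\le K\le4$. Suppose that (i) $a^{(K)}_{IJ}\equiv0\pmod{u^2}$; (ii) $a^{(k)}_{IJ}\equiv0\pmod u$ for all $1\le k\le4$; (iii) $a^{(K)}_{Ij}\equiv0\pmod u$ for all $1\le j\le5$; (iv) $a^{(K)}_{iJ}\equiv0\pmod u$ for all $1\le i\le5$. Then $\mathcal{A}$ is singular above $p$.
   Context: Work over $\mathbb{C}$. Fix $g\ge0$, $N=g+4$, $\mathcal{E}\cong\bigoplus_{k=1}^4\mathcal{O}_{\mathbb{P}^1}(e_k)$ with $e_1\le\dots\le e_4$, $\sum e_k=N$, and $\mathcal{F}\cong\bigoplus_{i=1}^5\mathcal{O}(f_i)$ with $f_1\le\dots\le f_5$, $\sum f_i=2N$, with these splittings fixed; $d^{(k)}_{ij}=f_i+f_j+e_k-N$. A section $\mathcal{A}\in H^0(\bigwedge^2\mathcal{F}\otimes\mathcal{E}\otimes\det\mathcal{E}^\vee)$ is a quadruple $(A_1,\dots,A_4)$ of $5\times5$ alternating matrices whose $(i,j)$ entry $a^{(k)}_{ij}$ of $A_k$ is a homogeneous form in $\mathbb{C}[s,t]$ of degree $d^{(k)}_{ij}$ (zero if this is negative), $a^{(k)}_{ji}=-a^{(k)}_{ij}$. Let $\mathcal{A}(\mathbf{x})=\sum_k A_kx_k$, and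 let $C_{\mathcal{A}}\subset\mathbb{P}(\mathcal{E})$ (fiber coordinates $x_1,\dots,x_4$) be the closed subscheme cut out by the five $4\times4$ principal sub-Pfaffians of $\mathcal{A}(\mathbf{x})$. $\mathcal{A}$ is smooth at a point $P\in C_{\mathcal{A}}$ if the Zariski tangent space of $C_{\mathcal{A}}$ at $P$ is 1-dimensional, and singular at $P$ otherwise; $\mathcal{A}$ is singular above $p\in\mathbb{P}^1$ if it is singular at some point of $C_{\mathcal{A}}$ lying over $p$. For a form $a$ and a uniformizer (linear form) $u$ at $p$, $a\equiv0\pmod{u^m}$ means $u^m$ divides $a$. *)

theory Defs
  imports "HOL-Analysis.Analysis" "HOL-Computational_Algebra.Polynomial" "Jordan_Normal_Form.Matrix_Kernel"
begin

text \<open>The polynomial ring C[s,t] is represented as (C[t])[s], i.e. the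
  type complex poly poly: the outer variable is s, the inner one is t.\<close>

type_synonym bform = "complex poly poly"

definition var_s :: bform where "var_s = [:0, 1:]"
definition var_t :: bform where "var_t = [:[:0, 1:]:]"

definition lin_form :: "complex \<Rightarrow> complex \<Rightarrow> bform" where
  "lin_form \<alpha> \<beta> = Polynomial.smult [:\<alpha>:] var_s + Polynomial.smult [:\<beta>:] var_t"

definition eval2 :: "bform \<Rightarrow> complex \<Rightarrow> complex \<Rightarrow> complex" where
  "eval2 P s t = poly (poly P [:s:]) t"

definition hom_form :: "int \<Rightarrow> bform \<Rightarrow> bool" where
  "hom_form d P \<longleftrightarrow> (if d < 0 then P = 0 else
     (\<forall>i. coeff P i = (if i \<le> nat d then monom (coeff (coeff P i) (nat d - i)) (nat d - i) else 0)))"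

definition uniformizer :: "bform \<Rightarrow> complex \<Rightarrow> complex \<Rightarrow> bool" where
  "uniformizer u s0 t0 \<longleftrightarrow> (\<exists>\<alpha> \<beta>. (\<alpha>, \<beta>) \<noteq> (0, 0) \<and> \<alpha> * s0 + \<beta> * t0 = 0 \<and> u = lin_form \<alpha> \<beta>)"

text \<open>The data: a k i j is the (i,j) entry of A_k, indices k in {1..4}, i,j in {1..5}.\<close>
definition is_section ::
  "nat \<Rightarrow> (nat \<Rightarrow> int) \<Rightarrow> (nat \<Rightarrow> int) \<Rightarrow> (nat \<Rightarrow> nat \<Rightarrow> nat \<Rightarrow> bform) \<Rightarrow> bool" where
  "is_section g e f a \<longleftrightarrow>
     (\<forall>k\<in>{1..4}. \<forall>i\<in>{1..5}. \<forall>j\<in>{1..5}.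
        hom_form (f i + f j + e k - (int g + 4)) (a k i j) \<and> a k j i = - a k i j)"

text \<open>Points of the cone over P(E): z 0 = s, z 1 = t, z (k+1) = x_k for k = 1..4.
  Entry (i,j) of A(x) evaluated at such a point.\<close>
definition Aentry :: "(nat \<Rightarrow> nat \<Rightarrow> nat \<Rightarrow> bform) \<Rightarrow> nat \<Rightarrow> nat \<Rightarrow> (nat \<Rightarrow> complex) \<Rightarrow> complex" where
  "Aentry a i j z = (\<Sum>k=1..4. eval2 (a k i j) (z 0) (z 1) * z (k + 1))"

definition subpf :: "(nat \<Rightarrow> nat \<Rightarrow> nat \<Rightarrow> bform) \<Rightarrow> nat \<Rightarrow> (nat \<Rightarrow> complex) \<Rightarrow> complex" where
  "subpf a m z = (let l = sorted_list_of_set ({1..5} - {m}); M = (\<lambda>i j. Aentry a (l!i) (l!j) z) in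
      M 0 1 * M 2 3 - M 0 2 * M 1 3 + M 0 3 * M 1 2)"

definition pdiff :: "((nat \<Rightarrow> complex) \<Rightarrow> complex) \<Rightarrow> nat \<Rightarrow> (nat \<Rightarrow> complex) \<Rightarrow> complex" where
  "pdiff F v z = deriv (\<lambda>w. F (z(v := w))) (z v)"

definition jac :: "(nat \<Rightarrow> nat \<Rightarrow> nat \<Rightarrow> bform) \<Rightarrow> (nat \<Rightarrow> complex) \<Rightarrow> complex mat" where
  "jac a z = mat 5 6 (\<lambda>(m, v). pdiff (subpf a (m + 1)) v z)"

text \<open>P(E) is the quotient of
  (C^2 - 0) x (C^4 - 0) by the free action of the torus (C^*)^2,
  (l,m).(s,t,x) = (l s, l t, m l^(-e_k) x_k), which is a smooth morphism with
  2-dimensional fibres; the five sub-Pfaffians are bihomogeneous for this grading.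
  Hence the Zariski tangent space of C_A at the image point has dimension
  dim ker(Jacobian) - 2.\<close>
definition on_CA :: "(nat \<Rightarrow> nat \<Rightarrow> nat \<Rightarrow> bform) \<Rightarrow> (nat \<Rightarrow> complex) \<Rightarrow> bool" where
  "on_CA a z \<longleftrightarrow> (z 0, z 1) \<noteq> (0, 0) \<and> (\<exists>k\<in>{1..4}. z (k + 1) \<noteq> 0)
       \<and> (\<forall>m\<in>{1..5}. subpf a m z = 0)"

definition tangent_dim :: "(nat \<Rightarrow> nat \<Rightarrow> nat \<Rightarrow> bform) \<Rightarrow> (nat \<Rightarrow> complex) \<Rightarrow> nat" where
  "tangent_dim a z = kernel_dim (jac a z) - 2"

definition singular_at :: "(nat \<Rightarrow> nat \<Rightarrow> nat \<Rightarrow> bform) \<Rightarrow> (nat \<Rightarrow> complex) \<Rightarrow> bool" where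
  "singular_at a z \<longleftrightarrow> on_CA a z \<and> tangent_dim a z \<noteq> 1"

definition singular_above :: "(nat \<Rightarrow> nat \<Rightarrow> nat \<Rightarrow> bform) \<Rightarrow> complex \<Rightarrow> complex \<Rightarrow> bool" where
  "singular_above a s0 t0 \<longleftrightarrow>
     (\<exists>z. (\<exists>c. c \<noteq> 0 \<and> z 0 = c * s0 \<and> z 1 = c * t0) \<and> singular_at a z)"

end

theory Submission
  imports Defs
begin


lemma eval2_mult[simp]: "eval2 (P * Q) s t = eval2 P s t * eval2 Q s t"
  by (simp add: eval2_def)
lemma eval2_minus[simp]: "eval2 (- P) s t = - eval2 P s t"
  by (simp add: eval2_def)
lemma eval2_power[simp]: "eval2 (P ^ n) s t = eval2 P s t ^ n"
  by (induct n) (simp_all add: eval2_def)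
lemma eval2_lin[simp]: "eval2 (lin_form al be) s t = al * s + be * t"
  by (simp add: eval2_def lin_form_def var_s_def var_t_def)

lemma eval2_alt: "eval2 P x y = (\<Sum>i\<le>degree P. poly (coeff P i) y * x ^ i)"
proof -
  have "eval2 P x y = poly (\<Sum>i\<le>degree P. coeff P i * [:x:] ^ i) y"
    by (simp add: eval2_def poly_altdef)
  also have "\<dots> = (\<Sum>i\<le>degree P. poly (coeff P i) y * x ^ i)"
    by (simp add: poly_sum poly_monom)
  finally show ?thesis .
qed

lemma eval2_diff:
  assumes "f field_differentiable at w" "g field_differentiable at w"
  shows "(\<lambda>w. eval2 P (f w) (g w)) field_differentiable at w"
proof -
  have pd: "(\<lambda>w. poly c (g w)) field_differentiable at w" for c
  proof -
    have "(poly c \<circ> g) field_differentiable at w"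
      by (rule field_differentiable_compose[OF assms(2)])
         (meson poly_DERIV field_differentiable_def)
    thus ?thesis by (simp add: o_def)
  qed
  show ?thesis unfolding eval2_alt
    by (intro field_differentiable_sum field_differentiable_mult field_differentiable_power pd assms)
qed

lemma kdim:
  fixes A :: "complex mat"
  assumes A: "A \<in> carrier_mat 5 6" and r1: "r1 < 5" and r2: "r2 < 5"
    and z: "\<And>i j. i < 5 \<Longrightarrow> j < 6 \<Longrightarrow> i \<noteq> r1 \<Longrightarrow> i \<noteq> r2 \<Longrightarrow> A $$ (i, j) = 0"
  shows "kernel_dim A \<ge> 4"
proof -
  define B :: "complex mat" where "B = mat 2 6 (\<lambda>(i,j). A $$ (if i = 0 then r1 else r2, j))"
  have B: "B \<in> carrier_mat 2 6" by (simp add: B_def)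
  have eq1: "v \<in> mat_kernel B" if "v \<in> mat_kernel A" for v
  proof -
    from that have v: "v \<in> carrier_vec 6" and Av: "A *\<^sub>v v = 0\<^sub>v 5" using mat_kernelD[OF A] by auto
    have "B *\<^sub>v v = 0\<^sub>v 2"
    proof (rule eq_vecI)
      fix i assume i: "i < dim_vec (0\<^sub>v 2 :: complex vec)"
      have "row B i = row A (if i = 0 then r1 else r2)"
        using i A by (auto simp: B_def row_def)
      moreover have "row A (if i = 0 then r1 else r2) \<bullet> v = 0"
        using arg_cong[OF Av, of "\<lambda>x. x $ (if i = 0 then r1 else r2)"] r1 r2 A
        by auto
      ultimately show "(B *\<^sub>v v) $ i = 0\<^sub>v 2 $ i" using i B by auto
    qed (use B in auto)
    thus "v \<in> mat_kernel B" using mat_kernelI[OF B v] by auto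
  qed
  have eq2': "v \<in> mat_kernel A" if "v \<in> mat_kernel B" for v
  proof -
    from that have v: "v \<in> carrier_vec 6" and Bv: "B *\<^sub>v v = 0\<^sub>v 2" using mat_kernelD[OF B] by auto
    have "A *\<^sub>v v = 0\<^sub>v 5"
    proof (rule eq_vecI)
      fix i assume i: "i < dim_vec (0\<^sub>v 5 :: complex vec)"
      show "(A *\<^sub>v v) $ i = 0\<^sub>v 5 $ i"
      proof (cases "i = r1 \<or> i = r2")
        case True
        have "\<exists>i'::nat. i' < 2 \<and> i = (if i' = 0 then r1 else r2)"
          using True by (elim disjE) (rule exI[of _ 0], simp, rule exI[of _ 1], simp)
        then obtain i' :: nat where i': "i' < 2" "i = (if i' = 0 then r1 else r2)" by blast
        have "row B i' = row A i" using i' A by (auto simp: B_def row_def)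
        moreover have "row B i' \<bullet> v = 0"
          using arg_cong[OF Bv, of "\<lambda>x. x $ i'"] i' B by auto
        ultimately show ?thesis using i A by auto
      next
        case False
        have "row A i = 0\<^sub>v 6" using z[of i] False i A by (auto simp: row_def)
        thus ?thesis using i A v by auto
      qed
    qed (use A in auto)
    thus "v \<in> mat_kernel A" using mat_kernelI[OF A v] by auto
  qed
  have eq: "mat_kernel A = mat_kernel B" using eq1 eq2' by blast
  obtain C where gj: "gauss_jordan_single B = C" by auto
  from gauss_jordan_single[OF B gj]
  obtain P Q where CPA: "C = P * B" and QP: "Q * P = 1\<^sub>m 2"
    and P: "P \<in> carrier_mat 2 2" and Q: "Q \<in> carrier_mat 2 2"
    and C: "C \<in> carrier_mat 2 6" and row: "row_echelon_form C"
    by auto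
  have eq2: "mat_kernel C = mat_kernel B" unfolding CPA
    by (rule mat_kernel_mult_eq[OF B P Q QP])
  have "card {i. i < 2 \<and> row C i \<noteq> 0\<^sub>v 6} \<le> card {i::nat. i < 2}"
    by (rule card_mono) auto
  hence c2: "card {i. i < 2 \<and> row C i \<noteq> 0\<^sub>v 6} \<le> 2" by simp
  have "kernel.dim 6 C \<ge> 4" using find_base_vectors(6)[OF row C] c2 by simp
  thus ?thesis using A unfolding kernel_dim_def eq eq2[symmetric] by simp
qed



lemma if_w_diff[simp, derivative_intros]: "(\<lambda>w. if b then w else c) field_differentiable F"
  by (cases b) simp_all

lemma pdiff_zero_gen:
  assumes z: "z = (\<lambda>n. if n = 0 then s0 else if n = 1 then t0 else if n = K + 1 then 1 else (0::complex))"
  shows "Aentry a i j (z(v := w)) = (\<Sum>k=1..4. eval2 (a k i j) (if v = 0 then w else s0) (if v = 1 then w else t0)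
          * (if v = k + 1 then w else if k = K then 1 else 0))"
  unfolding Aentry_def by (rule sum.cong) (auto simp: z)

lemma Aentry_diff:
  assumes z: "z = (\<lambda>n. if n = 0 then s0 else if n = 1 then t0 else if n = K + 1 then 1 else (0::complex))"
  shows "(\<lambda>w. Aentry a i j (z(v := w))) field_differentiable at x"
  unfolding pdiff_zero_gen[OF z]
  by (intro field_differentiable_sum field_differentiable_mult eval2_diff if_w_diff)

lemma sorted_facts:
  assumes m: "m \<in> {1..5::nat}"
  defines "l \<equiv> sorted_list_of_set ({1..5} - {m})"
  shows "length l = 4" "distinct l" "set l = {1..5} - {m}"
proof -
  show "set l = {1..5} - {m}" "distinct l" unfolding l_def by auto
  have "card ({1..5::nat} - {m}) = 4" using m by (simp add: card_Diff_singleton)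
  thus "length l = 4" unfolding l_def by simp
qed

lemma four_elems:
  assumes "length l = 4" "x \<in> set l"
  shows "x = l!0 \<or> x = l!1 \<or> x = l!2 \<or> x = l!3"
proof -
  obtain i where "i < 4" "x = l ! i" using assms by (metis in_set_conv_nth)
  thus ?thesis by (auto simp: less_Suc_eq numeral_eq_Suc)
qed



theorem lemma3p2:
  fixes g :: nat and e f :: "nat \<Rightarrow> int" and a :: "nat \<Rightarrow> nat \<Rightarrow> nat \<Rightarrow> bform"
    and s0 t0 :: complex and u :: bform and I J K :: nat
  assumes e_sorted: "e 1 \<le> e 2" "e 2 \<le> e 3" "e 3 \<le> e 4"
    and e_sum: "(\<Sum>k=1..4. e k) = int g + 4"
    and f_sorted: "f 1 \<le> f 2" "f 2 \<le> f 3" "f 3 \<le> f 4" "f 4 \<le> f 5"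
    and f_sum: "(\<Sum>i=1..5. f i) = 2 * (int g + 4)"
    and sec: "is_section g e f a"
    and p: "(s0, t0) \<noteq> (0, 0)"
    and unif: "uniformizer u s0 t0"
    and IJK: "1 \<le> I" "I < J" "J \<le> 5" "1 \<le> K" "K \<le> 4"
    and h1: "u ^ 2 dvd a K I J"
    and h2: "\<forall>k\<in>{1..4}. u dvd a k I J"
    and h3: "\<forall>j\<in>{1..5}. u dvd a K I j"
    and h4: "\<forall>i\<in>{1..5}. u dvd a K i J"
  shows "singular_above a s0 t0"
proof -
  obtain al be where ab: "al * s0 + be * t0 = 0" and u: "u = lin_form al be"
    using unif unfolding uniformizer_def by blast
  have ev0: "eval2 P s0 t0 = 0" if d: "u dvd P" for P
  proof -
    obtain Q where "P = u * Q" using d by (auto elim: dvdE)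
    thus ?thesis using ab u by simp
  qed
  have anti: "a k j i = - a k i j" if "k \<in> {1..4}" "i \<in> {1..5}" "j \<in> {1..5}" for k i j
    using sec that unfolding is_section_def by blast
  define z where "z = (\<lambda>n. if n = 0 then s0 else if n = 1 then t0 else if n = K + 1 then 1 else (0::complex))"
  have Kin: "K \<in> {1..4}" using IJK by auto
  have Iin: "I \<in> {1..5}" and Jin: "J \<in> {1..5}" using IJK by auto
  have Az: "Aentry a i j z = eval2 (a K i j) s0 t0" for i j
  proof -
    have "Aentry a i j z = (\<Sum>k\<in>{1..4}. if k = K then eval2 (a K i j) s0 t0 else 0)"
      unfolding Aentry_def by (rule sum.cong) (auto simp: z_def)
    thus ?thesis using Kin by simp
  qed
  have Aanti: "Aentry a j i y = - Aentry a i j y" if "i \<in> {1..5}" "j \<in> {1..5}" for i j y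
    unfolding Aentry_def using anti[OF _ that] by (simp add: sum_negf[symmetric])
  have val0: "Aentry a p q z = 0" if "p \<in> {1..5}" "q \<in> {1..5}" "p \<in> {I, J} \<or> q \<in> {I, J}" for p q
  proof -
    have "p = I \<or> q = J \<or> p = J \<or> q = I" using that by auto
    moreover have ?thesis if "p = I" using h3 \<open>q \<in> {1..5}\<close> ev0 that Az by simp
    moreover have ?thesis if "q = J" using h4 \<open>p \<in> {1..5}\<close> ev0 that Az by simp
    moreover have ?thesis if "p = J" 
      using h4 \<open>q \<in> {1..5}\<close> ev0 that Aanti[of J q z] Jin Az by simp
    moreover have ?thesis if "q = I" 
      using h3 \<open>p \<in> {1..5}\<close> ev0 that Aanti[of p I z] Iin Az by simp
    ultimately show ?thesis by blast
  qed
  have zupd: "z(v := z v) = z" for v by simp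
  obtain Q where Q: "a K I J = u ^ 2 * Q" using h1 by (auto elim: dvdE)
  have dIJ: "deriv (\<lambda>w. Aentry a I J (z(v := w))) (z v) = 0" for v
  proof -
    have fe: "(\<lambda>w. Aentry a I J (z(v := w))) = (\<lambda>w. \<Sum>k=1..4. eval2 (a k I J) (if v = 0 then w else s0) (if v = 1 then w else t0)
          * (if v = k + 1 then w else if k = K then 1 else 0))"
      using pdiff_zero_gen[OF z_def] by blast
    consider "v = 0" | "v = 1" | "v \<noteq> 0 \<and> v \<noteq> 1" by blast
    thus ?thesis
    proof cases
      case 1
      have "(\<lambda>w. Aentry a I J (z(v := w))) = (\<lambda>w. \<Sum>k\<in>{1..4}. if k = K then eval2 (a K I J) w t0 else 0)"
        unfolding fe using 1 by (intro ext sum.cong) auto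
      also have "\<dots> = (\<lambda>w. (al * w + be * t0) ^ 2 * eval2 Q w t0)"
        using Kin by (simp add: Q u)
      finally have fe2: "(\<lambda>w. Aentry a I J (z(v := w))) = (\<lambda>w. (al * w + be * t0) ^ 2 * eval2 Q w t0)" .
      have "(\<lambda>w. eval2 Q w t0) field_differentiable at s0"
        by (rule eval2_diff) simp_all
      then obtain q' where q': "((\<lambda>w. eval2 Q w t0) has_field_derivative q') (at s0)"
        unfolding field_differentiable_def by blast
      have "((\<lambda>w. (al * w + be * t0) ^ 2 * eval2 Q w t0) has_field_derivative 0) (at s0)"
        by (rule derivative_eq_intros q' refl | simp add: ab)+
      thus ?thesis using 1 fe2 z_def by (simp add: DERIV_imp_deriv)
    next
      case 2
      have "(\<lambda>w. Aentry a I J (z(v := w))) = (\<lambda>w. \<Sum>k\<in>{1..4}. if k = K then eval2 (a K I J) s0 w else 0)"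
        unfolding fe using 2 by (intro ext sum.cong) auto
      also have "\<dots> = (\<lambda>w. (al * s0 + be * w) ^ 2 * eval2 Q s0 w)"
        using Kin by (simp add: Q u)
      finally have fe2: "(\<lambda>w. Aentry a I J (z(v := w))) = (\<lambda>w. (al * s0 + be * w) ^ 2 * eval2 Q s0 w)" .
      have "(\<lambda>w. eval2 Q s0 w) field_differentiable at t0"
        by (rule eval2_diff) simp_all
      then obtain q' where q': "((\<lambda>w. eval2 Q s0 w) has_field_derivative q') (at t0)"
        unfolding field_differentiable_def by blast
      have "((\<lambda>w. (al * s0 + be * w) ^ 2 * eval2 Q s0 w) has_field_derivative 0) (at t0)"
        by (rule derivative_eq_intros q' refl | simp add: ab)+
      thus ?thesis using 2 fe2 z_def by (simp add: DERIV_imp_deriv)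
    next
      case 3
      have "(\<lambda>w. Aentry a I J (z(v := w))) = (\<lambda>w. 0)"
        unfolding fe using 3 h2 ev0 by (intro ext sum.neutral) auto
      thus ?thesis by simp
    qed
  qed
  have dJI: "deriv (\<lambda>w. Aentry a J I (z(v := w))) (z v) = 0" for v
  proof -
    have "deriv (\<lambda>w. Aentry a J I (z(v := w))) (z v) = deriv (\<lambda>w. - Aentry a I J (z(v := w))) (z v)"
      using Aanti[OF Iin Jin] by simp
    also have "\<dots> = 0" using dIJ[of v] Aentry_diff[OF z_def] by simp
    finally show ?thesis .
  qed
  have term0: "deriv (\<lambda>w. Aentry a p q (z(v := w)) * Aentry a r s (z(v := w))) (z v) = 0"
    if "p \<in> {1..5}" "q \<in> {1..5}" "r \<in> {1..5}" "s \<in> {1..5}" "distinct [p, q, r, s]"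
       "I \<in> {p, q, r, s}" "J \<in> {p, q, r, s}" for p q r s v
  proof -
    have eq: "deriv (\<lambda>w. Aentry a p q (z(v := w)) * Aentry a r s (z(v := w))) (z v)
      = Aentry a p q z * deriv (\<lambda>w. Aentry a r s (z(v := w))) (z v)
        + deriv (\<lambda>w. Aentry a p q (z(v := w))) (z v) * Aentry a r s z"
      using Aentry_diff[OF z_def] by simp
    have c: "((p = I \<and> q = J) \<or> (p = J \<and> q = I)) \<or> ((r = I \<and> s = J) \<or> (r = J \<and> s = I))
       \<or> ((p \<in> {I, J} \<or> q \<in> {I, J}) \<and> (r \<in> {I, J} \<or> s \<in> {I, J}))"
      using that IJK by auto
    show ?thesis unfolding eq using c val0 that dIJ dJI by auto
  qed
  have prod0: "Aentry a p q z * Aentry a r s z = 0"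
    if "p \<in> {1..5}" "q \<in> {1..5}" "r \<in> {1..5}" "s \<in> {1..5}" "I \<in> {p, q, r, s} \<or> J \<in> {p, q, r, s}" for p q r s
  proof -
    have "(p \<in> {I, J} \<or> q \<in> {I, J}) \<or> (r \<in> {I, J} \<or> s \<in> {I, J})" using that by auto
    thus ?thesis using val0 that by auto
  qed
  have lfacts: "length l = 4 \<and> distinct [l!0, l!1, l!2, l!3] \<and> (\<forall>i<4. l!i \<in> {1..5})
      \<and> (\<forall>x\<in>{1..5} - {m}. x \<in> {l!0, l!1, l!2, l!3})"
    if "m \<in> {1..5}" "l = sorted_list_of_set ({1..5} - {m})" for m :: nat and l
  proof -
    note sf = sorted_facts[OF that(1), folded that(2)]
    have "distinct [l!0, l!1, l!2, l!3]" using sf(1,2) by (simp add: nth_eq_iff_index_eq)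
    moreover have "\<forall>i<4. l!i \<in> {1..5}" using sf by (metis DiffD1 nth_mem)
    moreover have "\<forall>x\<in>{1..5} - {m}. x \<in> {l!0, l!1, l!2, l!3}" using four_elems[OF sf(1)] sf(3) by auto
    ultimately show ?thesis using sf by blast
  qed
  have onCA: "on_CA a z"
    unfolding on_CA_def
  proof (intro conjI ballI)
    show "(z 0, z 1) \<noteq> (0, 0)" using p by (simp add: z_def)
    show "\<exists>k\<in>{1..4}. z (k + 1) \<noteq> 0" using Kin by (intro bexI[of _ K]) (auto simp: z_def)
  next
    fix m :: nat assume m: "m \<in> {1..5}"
    define l where "l = sorted_list_of_set ({1..5} - {m})"
    note lf = lfacts[OF m l_def]
    have IJl: "I \<in> {l!0, l!1, l!2, l!3} \<or> J \<in> {l!0, l!1, l!2, l!3}"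
    proof -
      have "I \<in> {1..5} - {m} \<or> J \<in> {1..5} - {m}" using Iin Jin IJK by auto
      thus ?thesis using lf by blast
    qed
    have l5: "l!0 \<in> {1..5}" "l!1 \<in> {1..5}" "l!2 \<in> {1..5}" "l!3 \<in> {1..5}" using lf by auto
    show "subpf a m z = 0" unfolding subpf_def Let_def l_def[symmetric]
      using prod0[OF l5(1,2,3,4)] prod0[OF l5(1,3,2,4)] prod0[OF l5(1,4,2,3)] IJl by auto
  qed
  have pd0: "pdiff (subpf a m) v z = 0" if m: "m \<in> {1..5}" "m \<noteq> I" "m \<noteq> J" for m v
  proof -
    define l where "l = sorted_list_of_set ({1..5} - {m})"
    note lf = lfacts[OF m(1) l_def]
    have IJl: "I \<in> {l!0, l!1, l!2, l!3}" "J \<in> {l!0, l!1, l!2, l!3}"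
      using lf Iin Jin m by blast+
    have l5: "l!0 \<in> {1..5}" "l!1 \<in> {1..5}" "l!2 \<in> {1..5}" "l!3 \<in> {1..5}" using lf by auto
    have di: "distinct [l!0, l!1, l!2, l!3]" "distinct [l!0, l!2, l!1, l!3]" "distinct [l!0, l!3, l!1, l!2]"
      using lf by auto
    note D = Aentry_diff[OF z_def]
    have dm: "(\<lambda>w. Aentry a p q (z(v := w)) * Aentry a r s (z(v := w))) field_differentiable at x" for p q r s x
      by (intro field_differentiable_mult D)
    have "pdiff (subpf a m) v z = 
      deriv (\<lambda>w. Aentry a (l!0) (l!1) (z(v := w)) * Aentry a (l!2) (l!3) (z(v := w))) (z v)
      - deriv (\<lambda>w. Aentry a (l!0) (l!2) (z(v := w)) * Aentry a (l!1) (l!3) (z(v := w))) (z v)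
      + deriv (\<lambda>w. Aentry a (l!0) (l!3) (z(v := w)) * Aentry a (l!1) (l!2) (z(v := w))) (z v)"
      unfolding pdiff_def subpf_def Let_def l_def[symmetric]
      by (subst deriv_add, intro field_differentiable_diff dm, rule dm, subst deriv_diff, (rule dm)+, rule refl)
    also have "\<dots> = 0"
      using term0[OF l5(1,2,3,4) di(1)] term0[OF l5(1,3,2,4) di(2)] term0[OF l5(1,4,2,3) di(3)] IJl
      by auto
    finally show ?thesis .
  qed
  have jc: "jac a z \<in> carrier_mat 5 6" by (simp add: jac_def)
  have "kernel_dim (jac a z) \<ge> 4"
  proof (rule kdim[OF jc, of "I - 1" "J - 1"])
    show "I - 1 < 5" "J - 1 < 5" using IJK by auto
    fix i j :: nat assume ij: "i < 5" "j < 6" "i \<noteq> I - 1" "i \<noteq> J - 1"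
    have "jac a z $$ (i, j) = pdiff (subpf a (i + 1)) j z" using ij by (simp add: jac_def)
    also have "\<dots> = 0" using ij IJK by (intro pd0) auto
    finally show "jac a z $$ (i, j) = 0" .
  qed
  hence "singular_at a z" using onCA unfolding singular_at_def tangent_dim_def by simp
  thus ?thesis unfolding singular_above_def
    by (intro exI[of _ z] conjI exI[of _ 1]) (auto simp: z_def)
qed

end
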